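(* Let $L>0$, $h_{min}>0$, $\mu_1>0$, $\mu_2>0$, and define $\tilde g(x)=x^2+h_{min}^2$ and $\tilde f(x)=(x^2+h_{min}^2)\big((x-L)^2+h_{min}^2\big)$. Consider $$\max_{x\in[0,L]}\ \min\left\{\frac{\mu_1}{\tilde g(x)},\ \frac{\mu_2\,\tilde g(x)}{\tilde f(x)}\right\}.$$ Let $\nu=\frac{h_{min}^2}{L^2+h_{min}^2}$ and, when $\mu_1\ne\mu_2$, $k=\frac{\mu_1}{\mu_1-\mu_2}$. Then the problem has a unique maximizer $x^*$, given by $$x^*=\begin{cases}0,& \mu_1\le \nu\mu_2,\\ L,& \mu_1\ge \mu_2/\nu,\\ \frac{L}{2},& \mu_1=\mu_2,\\ kL+\sqrt{k^2L^2-kL^2-h_{min}^2},& \nu\mu_2<\mu_1<\mu_2,\\ kL-\sqrt{k^2L^2-kL^2-h_{min}^2},& \mu_2<\mu_1<\mu_2/\nu.\end{cases}$$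
   Context: This is the reduced UAV placement problem for a decode-and-forward full-duplex relay (source at $(0,0,0)$, destination at $(L,0,0)$, UAV at $(x,0,h_{min})$); in the paper $\mu_1=\frac{p_S}{\rho p_R+\sigma^2}$ and $\mu_2=\frac{Np_R}{\sigma^2}$, but only $\mu_1,\mu_2>0$ is needed. *)

theory Defs
  imports Complex_Main
begin

definition g_tilde :: "real \<Rightarrow> real \<Rightarrow> real" where
  "g_tilde h x = x\<^sup>2 + h\<^sup>2"

definition f_tilde :: "real \<Rightarrow> real \<Rightarrow> real \<Rightarrow> real" where
  "f_tilde L h x = (x\<^sup>2 + h\<^sup>2) * ((x - L)\<^sup>2 + h\<^sup>2)"

definition uav_obj :: "real \<Rightarrow> real \<Rightarrow> real \<Rightarrow> real \<Rightarrow> real \<Rightarrow> real" where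
  "uav_obj L h mu1 mu2 x = min (mu1 / g_tilde h x) (mu2 * g_tilde h x / f_tilde L h x)"

definition is_maximizer :: "real \<Rightarrow> real \<Rightarrow> real \<Rightarrow> real \<Rightarrow> real \<Rightarrow> bool" where
  "is_maximizer L h mu1 mu2 x \<longleftrightarrow>
     x \<in> {0..L} \<and> (\<forall>y\<in>{0..L}. uav_obj L h mu1 mu2 y \<le> uav_obj L h mu1 mu2 x)"

end

theory Submission
  imports Defs
begin

lemma cancel_aux: "(G::real) \<noteq> 0 \<Longrightarrow> m * G / (G * F) = m / F"
  by (metis mult.commute nonzero_mult_div_cancel_left times_divide_eq_left divide_divide_eq_left)

lemma obj_eq:
  assumes "h > 0"
  shows "uav_obj L h mu1 mu2 y = min (mu1 / (y\<^sup>2 + h\<^sup>2)) (mu2 / ((y - L)\<^sup>2 + h\<^sup>2))"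
proof -
  have p1: "y\<^sup>2 + h\<^sup>2 > 0" using assms by (simp add: add_nonneg_pos)
  have p2: "(y-L)\<^sup>2 + h\<^sup>2 > 0" using assms by (simp add: add_nonneg_pos)
  have "mu2 * (y\<^sup>2 + h\<^sup>2) / ((y\<^sup>2 + h\<^sup>2) * ((y - L)\<^sup>2 + h\<^sup>2)) = mu2 / ((y - L)\<^sup>2 + h\<^sup>2)"
    by (rule cancel_aux) (use p1 in linarith)
  then show ?thesis unfolding uav_obj_def g_tilde_def f_tilde_def by simp
qed

lemma A_strict:
  fixes y z h mu1 :: real
  assumes "0 \<le> y" "y < z" "h > 0" "mu1 > 0"
  shows "mu1 / (z\<^sup>2 + h\<^sup>2) < mu1 / (y\<^sup>2 + h\<^sup>2)"
proof -
  have "y\<^sup>2 < z\<^sup>2" using assms by (simp add: power_strict_mono)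
  moreover have "y\<^sup>2 + h\<^sup>2 > 0" using assms by (simp add: add_nonneg_pos)
  ultimately show ?thesis using assms by (intro divide_strict_left_mono) auto
qed

lemma B_strict:
  fixes y z h mu2 L :: real
  assumes "z \<le> L" "y < z" "h > 0" "mu2 > 0"
  shows "mu2 / ((y - L)\<^sup>2 + h\<^sup>2) < mu2 / ((z - L)\<^sup>2 + h\<^sup>2)"
proof -
  have "(L - z)\<^sup>2 < (L - y)\<^sup>2" using assms by (simp add: power_strict_mono)
  hence "(z - L)\<^sup>2 < (y - L)\<^sup>2" by (simp add: power2_commute)
  moreover have "(z - L)\<^sup>2 + h\<^sup>2 > 0" using assms by (simp add: add_nonneg_pos)
  ultimately show ?thesis using assms by (intro divide_strict_left_mono) auto
qed

lemma unique_max: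
  assumes "x0 \<in> {0..L}"
    and "\<And>y. y \<in> {0..L} \<Longrightarrow> y \<noteq> x0 \<Longrightarrow> uav_obj L h mu1 mu2 y < uav_obj L h mu1 mu2 x0"
  shows "\<forall>x. is_maximizer L h mu1 mu2 x \<longleftrightarrow> x = x0"
  using assms unfolding is_maximizer_def
  by (metis less_eq_real_def not_less)

lemma cross_max:
  fixes L h mu1 mu2 c :: real
  assumes "L > 0" "h > 0" "mu1 > 0" "mu2 > 0" "c \<in> {0..L}"
    and "mu1 * ((c - L)\<^sup>2 + h\<^sup>2) = mu2 * (c\<^sup>2 + h\<^sup>2)"
  shows "\<forall>x. is_maximizer L h mu1 mu2 x \<longleftrightarrow> x = c"
proof (rule unique_max[OF assms(5)])
  have p1: "c\<^sup>2 + h\<^sup>2 > 0" using assms by (simp add: add_nonneg_pos)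
  have p2: "(c-L)\<^sup>2 + h\<^sup>2 > 0" using assms by (simp add: add_nonneg_pos)
  have eq: "mu1 / (c\<^sup>2 + h\<^sup>2) = mu2 / ((c - L)\<^sup>2 + h\<^sup>2)"
    using p1 p2 assms(6) by (subst frac_eq_eq) (auto simp: algebra_simps)
  fix y assume y: "y \<in> {0..L}" "y \<noteq> c"
  show "uav_obj L h mu1 mu2 y < uav_obj L h mu1 mu2 c"
  proof (cases "y < c")
    case True
    have "uav_obj L h mu1 mu2 y \<le> mu2 / ((y - L)\<^sup>2 + h\<^sup>2)" using obj_eq[OF assms(2)] by simp
    also have "\<dots> < mu2 / ((c - L)\<^sup>2 + h\<^sup>2)" using B_strict[of c L y h mu2] True assms by auto
    also have "\<dots> = uav_obj L h mu1 mu2 c" using obj_eq[OF assms(2)] eq by simp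
    finally show ?thesis .
  next
    case False
    hence "c < y" using y by auto
    have "uav_obj L h mu1 mu2 y \<le> mu1 / (y\<^sup>2 + h\<^sup>2)" using obj_eq[OF assms(2)] by simp
    also have "\<dots> < mu1 / (c\<^sup>2 + h\<^sup>2)" using A_strict[of c y h mu1] \<open>c < y\<close> assms by auto
    also have "\<dots> = uav_obj L h mu1 mu2 c" using obj_eq[OF assms(2)] eq by simp
    finally show ?thesis .
  qed
qed

theorem lemma3:
  fixes L h mu1 mu2 :: real
  assumes "L > 0" and "h > 0" and "mu1 > 0" and "mu2 > 0"
  defines "\<nu> \<equiv> h\<^sup>2 / (L\<^sup>2 + h\<^sup>2)"
  defines "k \<equiv> mu1 / (mu1 - mu2)"
  defines "xstar \<equiv>
    (if mu1 \<le> \<nu> * mu2 then 0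
     else if mu1 \<ge> mu2 / \<nu> then L
     else if mu1 = mu2 then L / 2
     else if \<nu> * mu2 < mu1 \<and> mu1 < mu2 then k * L + sqrt (k\<^sup>2 * L\<^sup>2 - k * L\<^sup>2 - h\<^sup>2)
     else k * L - sqrt (k\<^sup>2 * L\<^sup>2 - k * L\<^sup>2 - h\<^sup>2))"
  shows "\<forall>x. is_maximizer L h mu1 mu2 x \<longleftrightarrow> x = xstar"
proof -
  have h2: "h\<^sup>2 > 0" using assms by simp
  have Lh: "L\<^sup>2 + h\<^sup>2 > 0" using assms by (simp add: add_nonneg_pos)
  have c1: "mu1 \<le> \<nu> * mu2 \<longleftrightarrow> mu1 * (L\<^sup>2 + h\<^sup>2) \<le> mu2 * h\<^sup>2"
    unfolding \<nu>_def using Lh by (simp add: field_simps)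
  have c2: "mu1 \<ge> mu2 / \<nu> \<longleftrightarrow> mu1 * h\<^sup>2 \<ge> mu2 * (L\<^sup>2 + h\<^sup>2)"
    unfolding \<nu>_def using Lh h2 by (simp add: field_simps)
  show ?thesis
  proof (cases "mu1 \<le> \<nu> * mu2")
    case True
    hence xs: "xstar = 0" unfolding xstar_def by simp
    have le: "mu1 / h\<^sup>2 \<le> mu2 / (L\<^sup>2 + h\<^sup>2)" using True c1 Lh h2 by (simp add: field_simps)
    show ?thesis unfolding xs
    proof (rule unique_max)
      show "0 \<in> {0..L}" using assms by simp
      fix y assume y: "y \<in> {0..L}" "y \<noteq> 0"
      have "uav_obj L h mu1 mu2 y \<le> mu1 / (y\<^sup>2 + h\<^sup>2)" using obj_eq[OF assms(2)] by simp
      also have "\<dots> < mu1 / (0\<^sup>2 + h\<^sup>2)" using A_strict[of 0 y h mu1] y assms by auto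
      also have "\<dots> = uav_obj L h mu1 mu2 0" using obj_eq[OF assms(2)] le by simp
      finally show "uav_obj L h mu1 mu2 y < uav_obj L h mu1 mu2 0" .
    qed
  next
    case n1: False
    show ?thesis
    proof (cases "mu1 \<ge> mu2 / \<nu>")
      case True
      hence xs: "xstar = L" unfolding xstar_def using n1 by simp
      have le: "mu2 / h\<^sup>2 \<le> mu1 / (L\<^sup>2 + h\<^sup>2)" using True c2 Lh h2 by (simp add: field_simps)
      show ?thesis unfolding xs
      proof (rule unique_max)
        show "L \<in> {0..L}" using assms by simp
        fix y assume y: "y \<in> {0..L}" "y \<noteq> L"
        have "uav_obj L h mu1 mu2 y \<le> mu2 / ((y - L)\<^sup>2 + h\<^sup>2)" using obj_eq[OF assms(2)] by simp
        also have "\<dots> < mu2 / ((L - L)\<^sup>2 + h\<^sup>2)" using B_strict[of L L y h mu2] y assms by auto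
        also have "\<dots> = uav_obj L h mu1 mu2 L" using obj_eq[OF assms(2)] le by simp
        finally show "uav_obj L h mu1 mu2 y < uav_obj L h mu1 mu2 L" .
      qed
    next
      case n2: False
      have q0: "mu1 * (L\<^sup>2 + h\<^sup>2) > mu2 * h\<^sup>2" using n1 c1 by simp
      have qL: "mu1 * h\<^sup>2 < mu2 * (L\<^sup>2 + h\<^sup>2)" using n2 c2 by simp
      show ?thesis
      proof (cases "mu1 = mu2")
        case True
        hence xs: "xstar = L/2" unfolding xstar_def using n1 n2 by simp
        show ?thesis unfolding xs
          by (rule cross_max) (use assms True in \<open>auto simp: power2_eq_square algebra_simps\<close>)
      next
        case ne: False
        define q where "q x = (mu1 - mu2) * x\<^sup>2 - 2 * mu1 * L * x + mu1 * L\<^sup>2 + (mu1 - mu2) * h\<^sup>2" for x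
        have "\<exists>c\<ge>0. c \<le> L \<and> q c = 0"
          by (rule IVT2') (use q0 qL assms in \<open>auto simp: q_def algebra_simps power2_eq_square intro!: continuous_intros\<close>)
        then obtain c where c: "0 \<le> c" "c \<le> L" "q c = 0" by blast
        have ceq: "mu1 * ((c - L)\<^sup>2 + h\<^sup>2) = mu2 * (c\<^sup>2 + h\<^sup>2)"
          using c(3) unfolding q_def by (simp add: power2_eq_square algebra_simps)
        have dne: "mu1 - mu2 \<noteq> 0" using ne by simp
        have kd: "k*(mu1-mu2) = mu1" unfolding k_def using dne by simp
        have "(mu1-mu2)*(c\<^sup>2 - 2*k*L*c + k*L\<^sup>2 + h\<^sup>2) = (mu1-mu2)*c\<^sup>2 - 2*(k*(mu1-mu2))*L*c + (k*(mu1-mu2))*L\<^sup>2 + (mu1-mu2)*h\<^sup>2"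
          by (simp add: algebra_simps)
        also have "\<dots> = q c" unfolding kd q_def by simp
        finally have "c\<^sup>2 - 2*k*L*c + k*L\<^sup>2 + h\<^sup>2 = 0" using c(3) dne by simp
        hence D: "(c - k*L)\<^sup>2 = k\<^sup>2 * L\<^sup>2 - k * L\<^sup>2 - h\<^sup>2" by (simp add: power2_eq_square algebra_simps)
        hence sq: "sqrt (k\<^sup>2 * L\<^sup>2 - k * L\<^sup>2 - h\<^sup>2) = \<bar>c - k*L\<bar>" by (metis real_sqrt_abs)
        have key: "xstar = c"
        proof (cases "mu1 < mu2")
          case True
          have "k < 0" unfolding k_def using True assms by (simp add: divide_pos_neg)
          hence "k*L < 0" using assms(1) by (rule mult_neg_pos)
          hence "c - k*L \<ge> 0" using c(1) by linarith
          moreover have "xstar = k * L + sqrt (k\<^sup>2 * L\<^sup>2 - k * L\<^sup>2 - h\<^sup>2)"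
            unfolding xstar_def using n1 n2 True by (simp add: not_le)
          ultimately show ?thesis using sq by simp
        next
          case False
          hence gt: "mu1 > mu2" using ne by simp
          have "k > 1" unfolding k_def using gt assms by (simp add: field_simps)
          hence "(k - 1) * L > 0" using assms(1) by simp
          hence "k * L > L" by (simp add: algebra_simps)
          hence "c - k*L \<le> 0" using c by simp
          moreover have "xstar = k * L - sqrt (k\<^sup>2 * L\<^sup>2 - k * L\<^sup>2 - h\<^sup>2)"
            unfolding xstar_def using n1 n2 False ne by auto
          ultimately show ?thesis using sq by simp
        qed
        show ?thesis unfolding key by (rule cross_max) (use assms c ceq in auto)
      qed
    qed
  qed
qed

end
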